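(* Let $x_0\in X$ be a regular point. For every $p$-harmonic function $u\ge0$ on $\mathcal T(x_0)$ there exists a unique additive function $\nu$ on $\mathcal T(x_0)$ such that $$u(x)=\frac{1}{W^{(n(x))}(x)}\,\nu(x),\qquad x\in\mathcal T(x_0).$$ Conversely, if $\nu$ is an additive function on $\mathcal T(x_0)$ and $u$ is defined by this formula, then $u$ is $p$-harmonic.
   Context: $X$ is a compact metric space, $r:X\to X$ a finite-to-one, onto, Borel map, $m_0$ a Borel function with $\frac{1}{\#r^{-1}(x)}\sum_{r(y)=x}|m_0(y)|^2=1$, and $W(x)=|m_0(x)|^2/\#r^{-1}(r(x))$. A point $x_0$ is regular if the sets $r^{-n}(x_0)$, $n\in\mathbb N$, are mutually disjoint and no $r^{-n}(x_0)$, $n\ge0$, meets the zero set of $W$. $\mathcal T(x_0)=\bigcup_{n\ge0}r^{-n}(x_0)$; $n(x)$ is the unique $n\ge0$ with $r^n(x)=x_0$. $W^{(n)}(x)=W(x)W(r(x))\cdots W(r^{n-1}(x))$ (equal to $1$ for $n=0$). A function $u$ on $\mathcal T(x_0)$ is $p$-harmonic if $u(x)=\sum_{r(y)=x}W(y)u(y)$ for all $x\in\mathcal T(x_0)$. A non-negative function $\nu$ on $\mathcal T(x_0)$ is additive if $\nu(x)=\sum_{r(y)=x}\nu(y)$ for all $x\in\mathcal T(x_0)$. *)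

theory Defs
  imports "HOL-Analysis.Analysis"
begin

definition preim :: "'a set \<Rightarrow> ('a \<Rightarrow> 'a) \<Rightarrow> 'a \<Rightarrow> 'a set" where
  "preim X r x = {y \<in> X. r y = x}"

definition standing :: "('a::metric_space) set \<Rightarrow> ('a \<Rightarrow> 'a) \<Rightarrow> ('a \<Rightarrow> complex) \<Rightarrow> bool" where
  "standing X r m0 \<longleftrightarrow>
     compact X \<and> r ` X = X \<and> (\<forall>x\<in>X. finite (preim X r x)) \<and>
     r \<in> measurable (restrict_space borel X) (restrict_space borel X) \<and>
     m0 \<in> borel_measurable (restrict_space borel X) \<and>
     (\<forall>x\<in>X. (1 / real (card (preim X r x))) * (\<Sum>y\<in>preim X r x. (cmod (m0 y))\<^sup>2) = 1)"

definition Wfun :: "'a set \<Rightarrow> ('a \<Rightarrow> 'a) \<Rightarrow> ('a \<Rightarrow> complex) \<Rightarrow> 'a \<Rightarrow> real" where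
  "Wfun X r m0 x = (cmod (m0 x))\<^sup>2 / real (card (preim X r (r x)))"

definition Wn :: "'a set \<Rightarrow> ('a \<Rightarrow> 'a) \<Rightarrow> ('a \<Rightarrow> complex) \<Rightarrow> nat \<Rightarrow> 'a \<Rightarrow> real" where
  "Wn X r m0 n x = (\<Prod>k<n. Wfun X r m0 ((r ^^ k) x))"

definition preimn :: "'a set \<Rightarrow> ('a \<Rightarrow> 'a) \<Rightarrow> nat \<Rightarrow> 'a \<Rightarrow> 'a set" where
  "preimn X r n x0 = {y \<in> X. (r ^^ n) y = x0}"

definition regular :: "'a set \<Rightarrow> ('a \<Rightarrow> 'a) \<Rightarrow> ('a \<Rightarrow> complex) \<Rightarrow> 'a \<Rightarrow> bool" where
  "regular X r m0 x0 \<longleftrightarrow> x0 \<in> X \<and>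
     (\<forall>n m. n \<noteq> m \<longrightarrow> preimn X r n x0 \<inter> preimn X r m x0 = {}) \<and>
     (\<forall>n. \<forall>y\<in>preimn X r n x0. Wfun X r m0 y \<noteq> 0)"

definition tree :: "'a set \<Rightarrow> ('a \<Rightarrow> 'a) \<Rightarrow> 'a \<Rightarrow> 'a set" where
  "tree X r x0 = (\<Union>n. preimn X r n x0)"

definition level :: "('a \<Rightarrow> 'a) \<Rightarrow> 'a \<Rightarrow> 'a \<Rightarrow> nat" where
  "level r x0 x = (THE n. (r ^^ n) x = x0)"

definition p_harmonic :: "'a set \<Rightarrow> ('a \<Rightarrow> 'a) \<Rightarrow> ('a \<Rightarrow> complex) \<Rightarrow> 'a \<Rightarrow> ('a \<Rightarrow> real) \<Rightarrow> bool" where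
  "p_harmonic X r m0 x0 u \<longleftrightarrow>
     (\<forall>x\<in>tree X r x0. u x = (\<Sum>y\<in>preim X r x. Wfun X r m0 y * u y))"

definition additive_fun :: "'a set \<Rightarrow> ('a \<Rightarrow> 'a) \<Rightarrow> 'a \<Rightarrow> ('a \<Rightarrow> real) \<Rightarrow> bool" where
  "additive_fun X r x0 \<nu> \<longleftrightarrow>
     (\<forall>x\<in>tree X r x0. \<nu> x \<ge> 0) \<and>
     (\<forall>x\<in>tree X r x0. \<nu> x = (\<Sum>y\<in>preim X r x. \<nu> y))"

end

theory Submission
  imports Defs
begin

lemma rX: assumes "standing X r m0" "x \<in> X" shows "(r ^^ k) x \<in> X"
  using assms by (induction k) (auto simp: standing_def)

lemma lvl:
  assumes "regular X r m0 x0" "x \<in> X" "(r ^^ n) x = x0"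
  shows "level r x0 x = n"
proof -
  have disj: "\<forall>n m. n \<noteq> m \<longrightarrow> preimn X r n x0 \<inter> preimn X r m x0 = {}"
    using assms(1) by (simp add: regular_def)
  have u: "m = n" if m: "(r ^^ m) x = x0" for m
  proof (rule ccontr)
    assume ne: "m \<noteq> n"
    have "x \<in> preimn X r m x0" "x \<in> preimn X r n x0"
      using assms(2,3) m by (simp_all add: preimn_def)
    moreover have "preimn X r m x0 \<inter> preimn X r n x0 = {}" using disj ne by blast
    ultimately show False by blast
  qed
  show ?thesis unfolding level_def
    by (rule the_equality) (rule assms(3), rule u)
qed

lemma tree_iff: "x \<in> tree X r x0 \<longleftrightarrow> x \<in> X \<and> (r ^^ level r x0 x) x = x0" if "regular X r m0 x0"
proof
  assume "x \<in> tree X r x0"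
  then obtain n where "x \<in> X" "(r ^^ n) x = x0" by (auto simp: tree_def preimn_def)
  then show "x \<in> X \<and> (r ^^ level r x0 x) x = x0" using lvl[OF that] by auto
qed (auto simp: tree_def preimn_def)

lemma child:
  assumes "regular X r m0 x0" "x \<in> tree X r x0" "y \<in> preim X r x"
  shows "y \<in> tree X r x0 \<and> level r x0 y = Suc (level r x0 x)"
proof -
  have y: "y \<in> X" "r y = x" using assms(3) by (auto simp: preim_def)
  have "(r ^^ Suc (level r x0 x)) y = x0"
    using tree_iff[OF assms(1)] assms(2) y by (simp only: funpow_Suc_right o_apply)
  then show ?thesis using lvl[OF assms(1) y(1)] y(1) unfolding tree_def preimn_def by blast
qed

lemma Wn_Suc: "Wn X r m0 (Suc n) y = Wfun X r m0 y * Wn X r m0 n (r y)"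
  unfolding Wn_def by (simp only: prod.lessThan_Suc_shift funpow_Suc_right o_apply funpow_0)

lemma W_nonneg: "Wfun X r m0 y \<ge> 0" by (simp add: Wfun_def)

lemma Wn_pos:
  assumes "standing X r m0" "regular X r m0 x0" "x \<in> tree X r x0"
  shows "Wn X r m0 (level r x0 x) x > 0"
proof -
  let ?n = "level r x0 x"
  have x: "x \<in> X" "(r ^^ ?n) x = x0" using tree_iff[OF assms(2)] assms(3) by auto
  have "Wfun X r m0 ((r ^^ k) x) \<noteq> 0" if "k < ?n" for k
  proof -
    have "(r ^^ (?n - k)) ((r ^^ k) x) = x0" using x that
      by (metis funpow_add le_add_diff_inverse2 less_imp_le_nat o_apply)
    then have "(r ^^ k) x \<in> preimn X r (?n - k) x0" using rX[OF assms(1) x(1)] by (simp add: preimn_def)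
    then show ?thesis using assms(2) unfolding regular_def by blast
  qed
  then show ?thesis unfolding Wn_def
    by (intro prod_pos) (metis W_nonneg lessThan_iff order_le_less)
qed

theorem corollary4p7:
  fixes X :: "'a::metric_space set" and r :: "'a \<Rightarrow> 'a" and m0 :: "'a \<Rightarrow> complex" and x0 :: 'a
  assumes "standing X r m0"
    and "regular X r m0 x0"
  shows "(\<forall>u. p_harmonic X r m0 x0 u \<and> (\<forall>x\<in>tree X r x0. u x \<ge> 0) \<longrightarrow>
            (\<exists>!\<nu>. \<nu> \<in> extensional (tree X r x0) \<and> additive_fun X r x0 \<nu> \<and>
               (\<forall>x\<in>tree X r x0. u x = \<nu> x / Wn X r m0 (level r x0 x) x)))
       \<and> (\<forall>\<nu> u. additive_fun X r x0 \<nu> \<and>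
            (\<forall>x\<in>tree X r x0. u x = \<nu> x / Wn X r m0 (level r x0 x) x) \<longrightarrow>
            p_harmonic X r m0 x0 u)"
proof (intro conjI allI impI)
  let ?T = "tree X r x0" and ?L = "level r x0" and ?W = "Wfun X r m0" and ?Wn = "Wn X r m0"
  have pos: "\<And>x. x \<in> ?T \<Longrightarrow> ?Wn (?L x) x > 0" using Wn_pos[OF assms] .
  have ch: "\<And>x y. x \<in> ?T \<Longrightarrow> y \<in> preim X r x \<Longrightarrow> y \<in> ?T \<and> ?L y = Suc (?L x)"
    using child[OF assms(2)] .
  have ry: "\<And>x y. y \<in> preim X r x \<Longrightarrow> r y = x" by (simp add: preim_def)
  have WnS: "\<And>x y. x \<in> ?T \<Longrightarrow> y \<in> preim X r x \<Longrightarrow> ?Wn (?L y) y = ?W y * ?Wn (?L x) x"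
    using ch ry Wn_Suc by metis
  {
    fix u assume u: "p_harmonic X r m0 x0 u \<and> (\<forall>x\<in>?T. u x \<ge> 0)"
    define \<nu> where "\<nu> = restrict (\<lambda>x. u x * ?Wn (?L x) x) ?T"
    have add: "additive_fun X r x0 \<nu>"
      unfolding additive_fun_def
    proof (intro conjI ballI)
      fix x assume x: "x \<in> ?T"
      show "\<nu> x \<ge> 0" using u pos[OF x] x by (simp add: \<nu>_def)
      have "\<nu> x = (\<Sum>y\<in>preim X r x. ?W y * u y) * ?Wn (?L x) x"
        using u x by (simp add: \<nu>_def p_harmonic_def)
      also have "\<dots> = (\<Sum>y\<in>preim X r x. \<nu> y)"
        unfolding sum_distrib_right
      proof (rule sum.cong)
        fix y assume y: "y \<in> preim X r x"
        have h: "y \<in> ?T" "?Wn (?L y) y = ?W y * ?Wn (?L x) x"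
          using ch[OF x y] WnS[OF x y] by auto
        then show "?W y * u y * ?Wn (?L x) x = \<nu> y" by (simp add: \<nu>_def mult_ac)
      qed simp
      finally show "\<nu> x = (\<Sum>y\<in>preim X r x. \<nu> y)" .
    qed
    show "\<exists>!\<nu>. \<nu> \<in> extensional ?T \<and> additive_fun X r x0 \<nu> \<and>
               (\<forall>x\<in>?T. u x = \<nu> x / ?Wn (?L x) x)"
    proof (rule ex1I[of _ \<nu>])
      show "\<nu> \<in> extensional ?T \<and> additive_fun X r x0 \<nu> \<and> (\<forall>x\<in>?T. u x = \<nu> x / ?Wn (?L x) x)"
      proof (intro conjI ballI)
        show "\<nu> \<in> extensional ?T" by (simp add: \<nu>_def)
        show "additive_fun X r x0 \<nu>" by (rule add)
        fix x assume x: "x \<in> ?T"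
        have "?Wn (?L x) x \<noteq> 0" using pos[OF x] by simp
        then show "u x = \<nu> x / ?Wn (?L x) x" using x by (simp add: \<nu>_def)
      qed
    next
      fix \<mu> assume m: "\<mu> \<in> extensional ?T \<and> additive_fun X r x0 \<mu> \<and> (\<forall>x\<in>?T. u x = \<mu> x / ?Wn (?L x) x)"
      show "\<mu> = \<nu>"
      proof
        fix x show "\<mu> x = \<nu> x"
        proof (cases "x \<in> ?T")
          case True
          then show ?thesis using m pos[OF True] by (simp add: \<nu>_def)
        next
          case False
          then show ?thesis using m by (simp add: \<nu>_def extensional_def)
        qed
      qed
    qed
  }
  {
    fix \<nu> u assume a: "additive_fun X r x0 \<nu> \<and> (\<forall>x\<in>?T. u x = \<nu> x / ?Wn (?L x) x)"
    show "p_harmonic X r m0 x0 u"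
      unfolding p_harmonic_def
    proof
      fix x assume x: "x \<in> ?T"
      have "(\<Sum>y\<in>preim X r x. ?W y * u y) = (\<Sum>y\<in>preim X r x. \<nu> y / ?Wn (?L x) x)"
      proof (rule sum.cong)
        fix y assume y: "y \<in> preim X r x"
        have "?W y \<noteq> 0" using pos[of y] ch[OF x y] WnS[OF x y] by auto
        then show "?W y * u y = \<nu> y / ?Wn (?L x) x"
          using a ch[OF x y] WnS[OF x y] by simp
      qed simp
      also have "\<dots> = \<nu> x / ?Wn (?L x) x"
        using a x by (simp add: additive_fun_def sum_divide_distrib)
      finally show "u x = (\<Sum>y\<in>preim X r x. ?W y * u y)" using a x by simp
    qed
  }
qed

end
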